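(* Let $\mathcal{Z}\subset\mathbb{R}^d$ be a convex compact set with $\max_{\mathbf{z},\mathbf{z}'\in\mathcal{Z}}\|\mathbf{z}-\mathbf{z}'\|\le D$, let $\rho>0$, and let $F:\mathcal{Z}\rightrightarrows\mathbb{R}^d$ be a $\rho$-weakly monotone set-valued mapping such that $\mathrm{MVI}(F,\mathcal{Z})$ has a solution. Set $\gamma=\frac{1}{2\rho}$, fix $\alpha\ge 1$, an integer $K\ge1$, and weights $\theta_k=(k+1)^\alpha$. Let $\mathbf{z}_0\in\mathcal{Z}$ and let $\mathbf{z}_1,\dots,\mathbf{z}_K\in\mathcal{Z}$ be (possibly random) points generated sequentially by the inexact proximal point method: for $k=0,\dots,K-1$, with $F_k(\mathbf{z}):=F(\mathbf{z})+\gamma^{-1}(\mathbf{z}-\mathbf{z}_k)$, the point $\mathbf{z}_{k+1}$ is the output of a subroutine $\mathrm{ApproxSVI}(F_k,\mathcal{Z},\mathbf{z}_k,\eta_k,T_k)$. Suppose there is a constant $c>0$ such that for every $k=0,1,\dots,K-1$ there exists $\boldsymbol{\xi}_{k+1}\in F_k(\mathbf{z}_{k+1})$ with $$\max_{\mathbf{z}\in\mathcal{Z}}\mathbb{E}\big[\boldsymbol{\xi}_{k+1}^{\top}(\mathbf{z}_{k+1}-\mathbf{z})\,\big|\,\mathbf{z}_k\big]\le \frac{c}{k+1},$$ where $\mathbb{E}[\cdot\mid\mathbf{z}_k]$ is the conditional expectation conditioning on $\mathbf{z}_k$. Let $\tau\in\{0,1,\dots,K-1\}$ be drawn with $\mathrm{Prob}(\tau=k)=\theta_k/\sum_{l=0}^{K-1}\theta_l$,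 and let $\bar{\mathbf{z}}_\tau$ be the unique solution of $\mathrm{SVI}(F^\gamma_{\mathbf{z}_\tau},\mathcal{Z})$, where $F^\gamma_{\mathbf{w}}(\mathbf{z}):=F(\mathbf{z})+\gamma^{-1}(\mathbf{z}-\mathbf{w})$. Then $$\mathbb{E}\big[\|\mathbf{z}_\tau-\bar{\mathbf{z}}_\tau\|^2\big]\le \frac{2D^2(\alpha+1)}{K}+\frac{4c(\alpha+1)}{K\rho}.$$
   Context: $\|\cdot\|$ is the Euclidean norm. A set-valued mapping $F:\mathcal{Z}\rightrightarrows\mathbb{R}^d$ is $\rho$-weakly monotone if $\langle\boldsymbol{\xi}-\boldsymbol{\xi}',\mathbf{z}-\mathbf{z}'\rangle\ge-\rho\|\mathbf{z}-\mathbf{z}'\|^2$ for all $\mathbf{z},\mathbf{z}'\in\mathcal{Z}$, $\boldsymbol{\xi}\in F(\mathbf{z})$, $\boldsymbol{\xi}'\in F(\mathbf{z}')$; it is $\mu$-strongly monotone if the same holds with right-hand side $\mu\|\mathbf{z}-\mathbf{z}'\|^2$. $\mathrm{SVI}(F,\mathcal{Z})$ is the problem of finding $\mathbf{z}^*\in\mathcal{Z}$ such that there is $\boldsymbol{\xi}^*\in F(\mathbf{z}^* )$ with $\langle\boldsymbol{\xi}^*,\mathbf{z}-\mathbf{z}^*\rangle\ge0$ for all $\mathbf{z}\in\mathcal{Z}$. $\mathrm{MVI}(F,\mathcal{Z})$ is the problem of finding $\mathbf{z}_*\in\mathcal{Z}$ such that $\langle\boldsymbol{\xi},\mathbf{z}-\mathbf{z}_*\rangle\ge0$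 for all $\mathbf{z}\in\mathcal{Z}$ and all $\boldsymbol{\xi}\in F(\mathbf{z})$. For $0<\gamma<\rho^{-1}$ the mapping $F^\gamma_{\mathbf{w}}$ is $(\gamma^{-1}-\rho)$-strongly monotone, so $\mathrm{SVI}(F^\gamma_{\mathbf{w}},\mathcal{Z})$ has a unique solution. Expectations are over all randomness of the subroutines and of $\tau$. *)

theory Defs
  imports "HOL-Analysis.Analysis" "HOL-Probability.Probability"
begin

definition weakly_monotone_on :: "'a::euclidean_space set \<Rightarrow> ('a \<Rightarrow> 'a set) \<Rightarrow> real \<Rightarrow> bool" where
  "weakly_monotone_on Z F \<rho> \<longleftrightarrow>
     (\<forall>z\<in>Z. \<forall>z'\<in>Z. \<forall>\<xi>\<in>F z. \<forall>\<xi>'\<in>F z'. inner (\<xi> - \<xi>') (z - z') \<ge> - \<rho> * (norm (z - z'))\<^sup>2)"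

definition svi_solution :: "('a::euclidean_space \<Rightarrow> 'a set) \<Rightarrow> 'a set \<Rightarrow> 'a \<Rightarrow> bool" where
  "svi_solution F Z zs \<longleftrightarrow> zs \<in> Z \<and> (\<exists>\<xi>\<in>F zs. \<forall>z\<in>Z. inner \<xi> (z - zs) \<ge> 0)"

definition mvi_solution :: "('a::euclidean_space \<Rightarrow> 'a set) \<Rightarrow> 'a set \<Rightarrow> 'a \<Rightarrow> bool" where
  "mvi_solution F Z zs \<longleftrightarrow> zs \<in> Z \<and> (\<forall>z\<in>Z. \<forall>\<xi>\<in>F z. inner \<xi> (z - zs) \<ge> 0)"

definition prox_map :: "('a::euclidean_space \<Rightarrow> 'a set) \<Rightarrow> real \<Rightarrow> 'a \<Rightarrow> 'a \<Rightarrow> 'a set" where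
  "prox_map F \<gamma> w z = (\<lambda>\<xi>. \<xi> + (1 / \<gamma>) *\<^sub>R (z - w)) ` F z"

end

theory Submission
  imports Defs
begin


lemma prox_strong:
  fixes F :: "'a::euclidean_space \<Rightarrow> 'a set"
  assumes wmon: "weakly_monotone_on Z F \<rho>" and rho: "\<rho> > 0" and gam: "\<gamma> = 1 / (2 * \<rho>)"
    and z'Z: "z' \<in> Z" and xi: "\<xi> \<in> prox_map F \<gamma> w z'"
    and sol: "svi_solution (prox_map F \<gamma> w) Z zb"
  shows "\<rho> * (norm (z' - zb))\<^sup>2 \<le> inner \<xi> (z' - zb)"
proof -
  have ig: "1 / \<gamma> = 2 * \<rho>" using gam rho by simp
  obtain \<eta> where eta: "\<eta> \<in> F z'" "\<xi> = \<eta> + (2 * \<rho>) *\<^sub>R (z' - w)"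
    using xi unfolding prox_map_def ig by auto
  obtain \<zeta>' where zbZ: "zb \<in> Z" and z1: "\<zeta>' \<in> prox_map F \<gamma> w zb" and z2: "\<forall>u\<in>Z. inner \<zeta>' (u - zb) \<ge> 0"
    using sol unfolding svi_solution_def by auto
  obtain \<zeta> where zeta: "\<zeta> \<in> F zb" "\<zeta>' = \<zeta> + (2 * \<rho>) *\<^sub>R (zb - w)"
    using z1 unfolding prox_map_def ig by auto
  have m: "inner (\<eta> - \<zeta>) (z' - zb) \<ge> - \<rho> * (norm (z' - zb))\<^sup>2"
    using wmon z'Z zbZ eta zeta unfolding weakly_monotone_on_def by blast
  have s: "inner \<zeta>' (z' - zb) \<ge> 0" using z2 z'Z by blast
  have e: "inner \<xi> (z' - zb) - inner \<zeta>' (z' - zb) = inner (\<eta> - \<zeta>) (z' - zb) + 2 * \<rho> * (norm (z' - zb))\<^sup>2"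
    unfolding eta zeta power2_norm_eq_inner by (simp add: inner_simps algebra_simps)
  show ?thesis using m s e by linarith
qed

lemma prox_mvi:
  fixes F :: "'a::euclidean_space \<Rightarrow> 'a set"
  assumes rho: "\<rho> > 0" and gam: "\<gamma> = 1 / (2 * \<rho>)"
    and z'Z: "z' \<in> Z" and xi: "\<xi> \<in> prox_map F \<gamma> w z'"
    and mv: "mvi_solution F Z zs"
  shows "(norm (z' - zs))\<^sup>2 + (norm (z' - w))\<^sup>2 \<le> (norm (w - zs))\<^sup>2 + inner \<xi> (z' - zs) / \<rho>"
proof -
  have ig: "1 / \<gamma> = 2 * \<rho>" using gam rho by simp
  obtain \<eta> where eta: "\<eta> \<in> F z'" "\<xi> = \<eta> + (2 * \<rho>) *\<^sub>R (z' - w)"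
    using xi unfolding prox_map_def ig by auto
  have m: "inner \<eta> (z' - zs) \<ge> 0" using mv z'Z eta unfolding mvi_solution_def by blast
  have e: "inner \<xi> (z' - zs) = inner \<eta> (z' - zs) + \<rho> * ((norm (z' - zs))\<^sup>2 + (norm (z' - w))\<^sup>2 - (norm (w - zs))\<^sup>2)"
    unfolding eta power2_norm_eq_inner by (simp add: inner_simps algebra_simps inner_commute)
  have "\<rho> * ((norm (z' - zs))\<^sup>2 + (norm (z' - w))\<^sup>2 - (norm (w - zs))\<^sup>2) \<le> inner \<xi> (z' - zs)"
    using e m by linarith
  then show ?thesis using rho by (simp add: field_simps)
qed

lemma prox_lip:
  fixes F :: "'a::euclidean_space \<Rightarrow> 'a set"
  assumes wmon: "weakly_monotone_on Z F \<rho>" and rho: "\<rho> > 0" and gam: "\<gamma> = 1 / (2 * \<rho>)"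
    and s1: "svi_solution (prox_map F \<gamma> w) Z zb"
    and s2: "svi_solution (prox_map F \<gamma> w') Z zb'"
  shows "norm (zb - zb') \<le> 2 * norm (w - w')"
proof -
  have ig: "1 / \<gamma> = 2 * \<rho>" using gam rho by simp
  obtain \<zeta>1 where zbZ: "zb \<in> Z" and a1: "\<zeta>1 \<in> prox_map F \<gamma> w zb" and b1: "\<forall>u\<in>Z. inner \<zeta>1 (u - zb) \<ge> 0"
    using s1 unfolding svi_solution_def by auto
  obtain \<zeta>2 where zbZ': "zb' \<in> Z" and a2: "\<zeta>2 \<in> prox_map F \<gamma> w' zb'" and b2: "\<forall>u\<in>Z. inner \<zeta>2 (u - zb') \<ge> 0"
    using s2 unfolding svi_solution_def by auto
  obtain \<eta>1 where e1: "\<eta>1 \<in> F zb" "\<zeta>1 = \<eta>1 + (2 * \<rho>) *\<^sub>R (zb - w)"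
    using a1 unfolding prox_map_def ig by auto
  obtain \<eta>2 where e2: "\<eta>2 \<in> F zb'" "\<zeta>2 = \<eta>2 + (2 * \<rho>) *\<^sub>R (zb' - w')"
    using a2 unfolding prox_map_def ig by auto
  have m: "inner (\<eta>1 - \<eta>2) (zb - zb') \<ge> - \<rho> * (norm (zb - zb'))\<^sup>2"
    using wmon zbZ zbZ' e1 e2 unfolding weakly_monotone_on_def by blast
  have i1: "inner \<zeta>1 (zb' - zb) \<ge> 0" using b1 zbZ' by blast
  have i2: "inner \<zeta>2 (zb - zb') \<ge> 0" using b2 zbZ by blast
  have e: "inner \<zeta>1 (zb' - zb) + inner \<zeta>2 (zb - zb') =
     - inner (\<eta>1 - \<eta>2) (zb - zb') - 2 * \<rho> * (norm (zb - zb'))\<^sup>2 + 2 * \<rho> * inner (w - w') (zb - zb')"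
    unfolding e1 e2 power2_norm_eq_inner by (simp add: inner_simps algebra_simps inner_commute)
  have "\<rho> * (norm (zb - zb'))\<^sup>2 \<le> 2 * \<rho> * inner (w - w') (zb - zb')"
    using e m i1 i2 by linarith
  also have "\<dots> \<le> 2 * \<rho> * (norm (w - w') * norm (zb - zb'))"
    using rho Cauchy_Schwarz_ineq2[of "w - w'" "zb - zb'"] by (simp add: abs_le_iff)
  finally have "norm (zb - zb') * norm (zb - zb') \<le> (2 * norm (w - w')) * norm (zb - zb')"
    using rho by (simp add: power2_eq_square algebra_simps)
  then show ?thesis
    by (cases "norm (zb - zb') = 0") (auto simp: mult_le_cancel_right)
qed



lemma powr_step:
  fixes n :: nat and \<alpha> :: real
  assumes "\<alpha> \<ge> 0"
  shows "(real n + 1) powr (\<alpha> + 1) - real n powr (\<alpha> + 1) \<le> (\<alpha> + 1) * (real n + 1) powr \<alpha>"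
proof (cases "n = 0")
  case True then show ?thesis using assms by simp
next
  case False
  then have n1: "real n \<ge> 1" by simp
  define g where "g x = (\<alpha> + 1) * (real n + 1) powr \<alpha> * x - x powr (\<alpha> + 1)" for x :: real
  have "g (real n) \<le> g (real n + 1)"
  proof (rule DERIV_nonneg_imp_nondecreasing[of "real n"])
    fix x assume x: "real n \<le> x" "x \<le> real n + 1"
    then have xp: "x > 0" using n1 by simp
    have "(g has_real_derivative (\<alpha> + 1) * (real n + 1) powr \<alpha> - (\<alpha> + 1) * x powr (\<alpha> + 1 - 1)) (at x)"
      unfolding g_def
      by (intro derivative_eq_intros has_real_derivative_powr xp) auto
    moreover have "x powr \<alpha> \<le> (real n + 1) powr \<alpha>"
      using x xp assms by (intro powr_mono2) auto
    ultimately show "\<exists>y. (g has_real_derivative y) (at x) \<and> 0 \<le> y"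
      using assms by (intro exI[of _ "(\<alpha> + 1) * (real n + 1) powr \<alpha> - (\<alpha> + 1) * x powr (\<alpha> + 1 - 1)"])
        (auto intro: mult_left_mono)
  qed simp
  then show ?thesis unfolding g_def by (simp add: algebra_simps)
qed

lemma powr_sum_lower:
  fixes \<alpha> :: real
  assumes "\<alpha> \<ge> 0"
  shows "real K powr (\<alpha> + 1) / (\<alpha> + 1) \<le> (\<Sum>k<K. (real k + 1) powr \<alpha>)"
proof (induction K)
  case 0 then show ?case using assms by simp
next
  case (Suc K)
  have h: "real (Suc K) powr (\<alpha> + 1) \<le> real K powr (\<alpha> + 1) + (\<alpha> + 1) * (real K + 1) powr \<alpha>"
    using powr_step[OF assms, of K] by (simp add: add.commute)
  then have "real (Suc K) powr (\<alpha> + 1) / (\<alpha> + 1) \<le> real K powr (\<alpha> + 1) / (\<alpha> + 1) + (real K + 1) powr \<alpha>"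
    using assms divide_right_mono[OF h, of "\<alpha> + 1"] by (simp add: add_divide_distrib)
  then show ?case using Suc by simp
qed

lemma abel_bound:
  fixes \<theta> a :: "nat \<Rightarrow> real"
  assumes mono: "\<And>k. \<theta> k \<le> \<theta> (Suc k)" and pos: "\<And>k. \<theta> k \<ge> 0"
    and a0: "\<And>k. a k \<ge> 0" and aB: "\<And>k. a k \<le> B"
  shows "(\<Sum>k<Suc n. \<theta> k * (a k - a (Suc k))) + \<theta> n * a (Suc n) \<le> \<theta> n * B"
proof (induction n)
  case 0
  have "\<theta> 0 * a 0 \<le> \<theta> 0 * B" using aB[of 0] pos[of 0] by (rule mult_left_mono)
  then show ?case by (simp add: algebra_simps)
next
  case (Suc n)
  have "(\<theta> (Suc n) - \<theta> n) * a (Suc n) \<le> (\<theta> (Suc n) - \<theta> n) * B"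
    using mono aB by (intro mult_left_mono) (auto simp: algebra_simps)
  then show ?case using Suc by (simp add: algebra_simps)
qed



lemma cond_gap:
  fixes M :: "'m measure" and Y z' \<xi> :: "'m \<Rightarrow> 'a::euclidean_space" and \<phi> :: "'a \<Rightarrow> 'a"
  assumes P: "prob_space M"
   and Zc: "compact Z"
   and Ym: "Y \<in> borel_measurable M"
   and xim: "\<xi> \<in> borel_measurable M" and xiint: "integrable M (\<lambda>\<omega>. norm (\<xi> \<omega>))"
   and z'm: "z' \<in> borel_measurable M" and z'Z: "\<And>\<omega>. \<omega> \<in> space M \<Longrightarrow> z' \<omega> \<in> Z"
   and phic: "continuous_on UNIV \<phi>" and phiZ: "\<And>\<omega>. \<omega> \<in> space M \<Longrightarrow> \<phi> (Y \<omega>) \<in> Z"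
   and gap: "\<And>u. u \<in> Z \<Longrightarrow> AE \<omega> in M. real_cond_exp M (vimage_algebra (space M) Y borel)
                       (\<lambda>\<omega>'. inner (\<xi> \<omega>') (z' \<omega>' - u)) \<omega> \<le> C"
  shows "(\<integral>\<omega>. inner (\<xi> \<omega>) (z' \<omega> - \<phi> (Y \<omega>)) \<partial>M) \<le> C"
proof -
  interpret prob_space M by (rule P)
  define G where "G = vimage_algebra (space M) Y borel"
  have YG: "Y \<in> measurable G borel" unfolding G_def by (rule measurable_vimage_algebra1) simp
  have sub: "subalgebra M G"
    unfolding subalgebra_def G_def
    using Ym by (auto simp: sets_vimage_algebra2 measurable_sets)
  interpret S: finite_measure_subalgebra M G
    by unfold_locales (rule sub)
  obtain B where B: "\<And>x. x \<in> Z \<Longrightarrow> norm x \<le> B"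
    using compact_imp_bounded[OF Zc] unfolding bounded_iff by blast
  define g0 where "g0 = (\<lambda>\<omega>. inner (\<xi> \<omega>) (z' \<omega>))"
  define e where "e = (\<lambda>b \<omega>. inner (\<xi> \<omega>) b)"
  define CE where "CE = real_cond_exp M G"
  define h where "h = (\<lambda>\<omega> u. CE g0 \<omega> - (\<Sum>b\<in>Basis. inner u b * CE (e b) \<omega>))"
  have [measurable]: "\<xi> \<in> borel_measurable M" "z' \<in> borel_measurable M" by (fact xim z'm)+
  have int_e: "integrable M (e b)" for b :: 'a
  proof (rule Bochner_Integration.integrable_bound[where f="\<lambda>\<omega>. norm (\<xi> \<omega>) * norm b"])
    show "integrable M (\<lambda>\<omega>. norm (\<xi> \<omega>) * norm b)" using xiint by simp
    show "e b \<in> borel_measurable M" unfolding e_def by measurable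
    show "AE x in M. norm (e b x) \<le> norm (norm (\<xi> x) * norm b)"
      unfolding e_def by (auto simp: abs_mult Cauchy_Schwarz_ineq2)
  qed
  have int_g: "integrable M (\<lambda>\<omega>. inner (\<xi> \<omega>) (z' \<omega> - u))" for u
  proof (rule Bochner_Integration.integrable_bound[where f="\<lambda>\<omega>. norm (\<xi> \<omega>) * (B + norm u)"])
    show "integrable M (\<lambda>\<omega>. norm (\<xi> \<omega>) * (B + norm u))" using xiint by simp
    show "(\<lambda>\<omega>. inner (\<xi> \<omega>) (z' \<omega> - u)) \<in> borel_measurable M" by measurable
    show "AE x in M. norm (inner (\<xi> x) (z' x - u)) \<le> norm (norm (\<xi> x) * (B + norm u))"
    proof (rule AE_I2)
      fix x assume x: "x \<in> space M"
      have "norm (inner (\<xi> x) (z' x - u)) \<le> norm (\<xi> x) * norm (z' x - u)"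
        using norm_cauchy_schwarz by (simp add: Cauchy_Schwarz_ineq2)
      also have "\<dots> \<le> norm (\<xi> x) * (B + norm u)"
        using B[OF z'Z[OF x]] norm_triangle_ineq4[of "z' x" u]
        by (intro mult_left_mono) auto
      finally have "norm (inner (\<xi> x) (z' x - u)) \<le> norm (\<xi> x) * (B + norm u)" .
      then show "norm (inner (\<xi> x) (z' x - u)) \<le> norm (norm (\<xi> x) * (B + norm u))"
      proof -
        have "B + norm u \<ge> 0" using B[OF z'Z[OF x]] norm_ge_zero[of "z' x"] norm_ge_zero[of u] by linarith
        then show ?thesis using \<open>norm (inner (\<xi> x) (z' x - u)) \<le> norm (\<xi> x) * (B + norm u)\<close> by (simp add: abs_mult)
      qed
    qed
  qed
  have int_g0: "integrable M g0" using int_g[of 0] unfolding g0_def by simp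
  have gdec: "(\<lambda>\<omega>. inner (\<xi> \<omega>) (z' \<omega> - u)) = (\<lambda>\<omega>. g0 \<omega> - (\<Sum>b\<in>Basis. inner u b * e b \<omega>))" for u
    unfolding g0_def e_def by (auto simp: inner_diff_right euclidean_inner[of "\<xi> _" u] mult.commute)
  have stepA: "AE \<omega> in M. CE (\<lambda>\<omega>'. inner (\<xi> \<omega>') (z' \<omega>' - u)) \<omega> = h \<omega> u" for u
  proof -
    have i1: "integrable M (\<lambda>\<omega>. \<Sum>b\<in>Basis. inner u b * e b \<omega>)"
      using int_e by auto
    have a1: "AE \<omega> in M. CE (\<lambda>\<omega>. g0 \<omega> - (\<Sum>b\<in>Basis. inner u b * e b \<omega>)) \<omega> =
        CE g0 \<omega> - CE (\<lambda>\<omega>. \<Sum>b\<in>Basis. inner u b * e b \<omega>) \<omega>"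
      unfolding CE_def by (rule S.real_cond_exp_diff[OF int_g0 i1])
    have a2: "AE \<omega> in M. CE (\<lambda>\<omega>. \<Sum>b\<in>Basis. inner u b * e b \<omega>) \<omega> =
        (\<Sum>b\<in>Basis. CE (\<lambda>\<omega>. inner u b * e b \<omega>) \<omega>)"
      unfolding CE_def by (rule S.real_cond_exp_sum) (use int_e in auto)
    have a3: "AE \<omega> in M. \<forall>b\<in>Basis. CE (\<lambda>\<omega>. inner u b * e b \<omega>) \<omega> = inner u b * CE (e b) \<omega>"
      unfolding CE_def by (rule AE_finite_allI) (auto intro: S.real_cond_exp_cmult int_e)
    show ?thesis using a1 a2 a3 unfolding gdec h_def by eventually_elim simp
  qed
  obtain T where T: "countable T" "T \<subseteq> Z" "Z \<subseteq> closure T" by (rule separable)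
  have AT: "AE \<omega> in M. \<forall>u\<in>T. h \<omega> u \<le> C"
  proof (subst AE_ball_countable[OF T(1)], intro ballI)
    fix u assume u: "u \<in> T"
    then have uZ: "u \<in> Z" using T by auto
    show "AE \<omega> in M. h \<omega> u \<le> C"
      using gap[OF uZ] stepA[of u] unfolding CE_def G_def by eventually_elim simp
  qed
  have AZ: "AE \<omega> in M. \<forall>u\<in>Z. h \<omega> u \<le> C"
    using AT
  proof eventually_elim
    case (elim \<omega>)
    have "closed {u. h \<omega> u \<le> C}"
      unfolding h_def by (intro closed_Collect_le continuous_intros) 
    then have "closure T \<subseteq> {u. h \<omega> u \<le> C}" using elim by (intro closure_minimal) auto
    then show ?case using T by auto
  qed
  define U where "U = (\<lambda>\<omega>. \<phi> (Y \<omega>))"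
  have UG: "(\<lambda>\<omega>. inner (U \<omega>) b) \<in> borel_measurable G" for b
    unfolding U_def
    by (intro borel_measurable_continuous_on[OF _ YG] continuous_intros continuous_on_compose2[OF phic]) auto
  have UM: "(\<lambda>\<omega>. inner (U \<omega>) b) \<in> borel_measurable M" for b
    using UG measurable_from_subalg[OF sub] by blast
  have int_Ue: "integrable M (\<lambda>\<omega>. inner (U \<omega>) b * e b \<omega>)" if b: "b \<in> Basis" for b
  proof (rule Bochner_Integration.integrable_bound[where f="\<lambda>\<omega>. B * norm (e b \<omega>)"])
    show "integrable M (\<lambda>\<omega>. B * norm (e b \<omega>))" using int_e by auto
    show "(\<lambda>\<omega>. inner (U \<omega>) b * e b \<omega>) \<in> borel_measurable M"
      using UM int_e by (auto intro: borel_measurable_times)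
    show "AE x in M. norm (inner (U x) b * e b x) \<le> norm (B * norm (e b x))"
    proof (rule AE_I2)
      fix x assume x: "x \<in> space M"
      have "\<bar>inner (U x) b\<bar> \<le> B" using Basis_le_norm[OF b, of "U x"] B[OF phiZ[OF x]] unfolding U_def by linarith
      then have "\<bar>inner (U x) b\<bar> * \<bar>e b x\<bar> \<le> B * \<bar>e b x\<bar>" by (intro mult_right_mono) auto
      then show "norm (inner (U x) b * e b x) \<le> norm (B * norm (e b x))"
      proof -
        have "\<bar>B\<bar> = B" using B[OF phiZ[OF x]] norm_ge_zero[of "\<phi> (Y x)"] by linarith
        then show ?thesis using \<open>\<bar>inner (U x) b\<bar> * \<bar>e b x\<bar> \<le> B * \<bar>e b x\<bar>\<close> by (simp add: abs_mult)
      qed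
    qed
  qed
  have ce1: "(\<integral>\<omega>. inner (U \<omega>) b * CE (e b) \<omega> \<partial>M) = (\<integral>\<omega>. inner (U \<omega>) b * e b \<omega> \<partial>M)"
     and ce2: "integrable M (\<lambda>\<omega>. inner (U \<omega>) b * CE (e b) \<omega>)" if b: "b \<in> Basis" for b
    unfolding CE_def
    using S.real_cond_exp_intg[OF int_Ue[OF b] UG] int_e unfolding e_def by (auto simp: borel_measurable_integrable)
  have gU: "(\<lambda>\<omega>. inner (\<xi> \<omega>) (z' \<omega> - U \<omega>)) = (\<lambda>\<omega>. g0 \<omega> - (\<Sum>b\<in>Basis. inner (U \<omega>) b * e b \<omega>))"
    unfolding g0_def e_def by (auto simp: inner_diff_right euclidean_inner[of "\<xi> _" "U _"] mult.commute)
  have "(\<integral>\<omega>. inner (\<xi> \<omega>) (z' \<omega> - U \<omega>) \<partial>M) = (\<integral>\<omega>. g0 \<omega> \<partial>M) - (\<Sum>b\<in>Basis. \<integral>\<omega>. inner (U \<omega>) b * e b \<omega> \<partial>M)"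
    unfolding gU using int_Ue int_g0 by (simp add: integral_sum)
  also have "\<dots> = (\<integral>\<omega>. CE g0 \<omega> \<partial>M) - (\<Sum>b\<in>Basis. \<integral>\<omega>. inner (U \<omega>) b * CE (e b) \<omega> \<partial>M)"
    using ce1 S.real_cond_exp_int(2)[OF int_g0] unfolding CE_def by simp
  also have "\<dots> = (\<integral>\<omega>. h \<omega> (U \<omega>) \<partial>M)"
    unfolding h_def using ce2 S.real_cond_exp_int(1)[OF int_g0] unfolding CE_def by (simp add: integral_sum)
  also have "\<dots> \<le> (\<integral>\<omega>. C \<partial>M)"
  proof (rule integral_mono_AE)
    show "integrable M (\<lambda>\<omega>. h \<omega> (U \<omega>))"
      unfolding h_def using ce2 S.real_cond_exp_int(1)[OF int_g0] unfolding CE_def by auto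
    show "integrable M (\<lambda>\<omega>. C)" by simp
    show "AE \<omega> in M. h \<omega> (U \<omega>) \<le> C"
      using AZ by (rule AE_mp) (auto intro!: AE_I2 simp: U_def phiZ)
  qed
  also have "\<dots> = C" by (simp add: prob_space)
  finally show ?thesis unfolding U_def .
qed



lemma int_inner:
  fixes \<xi> z' V :: "'m \<Rightarrow> 'a::euclidean_space"
  assumes xim: "\<xi> \<in> borel_measurable M" and xiint: "integrable M (\<lambda>\<omega>. norm (\<xi> \<omega>))"
    and z'm: "z' \<in> borel_measurable M" and Vm: "V \<in> borel_measurable M"
    and bd: "\<And>\<omega>. \<omega> \<in> space M \<Longrightarrow> norm (z' \<omega> - V \<omega>) \<le> B"
  shows "integrable M (\<lambda>\<omega>. inner (\<xi> \<omega>) (z' \<omega> - V \<omega>))"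
proof (rule Bochner_Integration.integrable_bound[where f="\<lambda>\<omega>. norm (\<xi> \<omega>) * B"])
  show "integrable M (\<lambda>\<omega>. norm (\<xi> \<omega>) * B)" using xiint by simp
  show "(\<lambda>\<omega>. inner (\<xi> \<omega>) (z' \<omega> - V \<omega>)) \<in> borel_measurable M" using xim z'm Vm by measurable
  show "AE x in M. norm (inner (\<xi> x) (z' x - V x)) \<le> norm (norm (\<xi> x) * B)"
  proof (rule AE_I2)
    fix x assume x: "x \<in> space M"
    have "norm (inner (\<xi> x) (z' x - V x)) \<le> norm (\<xi> x) * norm (z' x - V x)"
      by (simp add: Cauchy_Schwarz_ineq2)
    also have "\<dots> \<le> norm (\<xi> x) * B" using bd[OF x] by (intro mult_left_mono) auto
    finally have *: "norm (inner (\<xi> x) (z' x - V x)) \<le> norm (\<xi> x) * B" .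
    have "B \<ge> 0" using bd[OF x] norm_ge_zero[of "z' x - V x"] by linarith
    then show "norm (inner (\<xi> x) (z' x - V x)) \<le> norm (norm (\<xi> x) * B)" using * by (simp add: abs_mult)
  qed
qed

lemma final_arith:
  fixes K :: nat and \<alpha> S X Q :: real
  assumes K: "K \<ge> 1" and a: "\<alpha> \<ge> 1" and S: "S \<ge> real K powr (\<alpha> + 1) / (\<alpha> + 1)"
    and Q: "Q \<ge> 0" and X: "X \<le> real K powr \<alpha> * Q / S"
  shows "X \<le> (\<alpha> + 1) * Q / real K"
proof -
  have Kp: "real K > 0" using K by simp
  have S0: "real K powr (\<alpha> + 1) / (\<alpha> + 1) > 0" using Kp a by simp
  have "real K powr \<alpha> * Q / S \<le> real K powr \<alpha> * Q / (real K powr (\<alpha> + 1) / (\<alpha> + 1))"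
  proof (rule divide_left_mono)
    have "S > 0" using S S0 by linarith
    then show "0 < S * (real K powr (\<alpha> + 1) / (\<alpha> + 1))" using S0 by (rule mult_pos_pos)
  qed (use S Q Kp in auto)
  also have "\<dots> = (\<alpha> + 1) * Q / real K"
    using Kp a by (simp add: powr_add field_simps)
  finally show ?thesis using X by linarith
qed


lemma indep_case:
  fixes I :: "'m \<Rightarrow> real" and \<tau> :: "'m \<Rightarrow> nat" and \<Phi> :: "'a::euclidean_space \<Rightarrow> real" and zk :: "'m \<Rightarrow> 'a"
  assumes e: "\<And>A. I -` A \<inter> space M = \<tau> -` ((\<lambda>n. indicator {k} n :: real) -` A) \<inter> space M"
  and PhiB: "\<Phi> \<in> borel_measurable borel"
  shows "{case_bool I (\<lambda>\<omega>. \<Phi> (zk \<omega>)) i -` A \<inter> space M |A. A \<in> sets (case_bool borel borel i)}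
              \<subseteq> case_bool {\<tau> -` A \<inter> space M | A. A \<in> sets (count_space UNIV)}
                  {zk -` B \<inter> space M | B. B \<in> sets borel} i"
proof (cases i)
  case True
  show ?thesis
  proof (simp add: True, intro subsetI)
    fix X assume "X \<in> {I -` A \<inter> space M |A. A \<in> sets borel}"
    then obtain A where "X = I -` A \<inter> space M" by auto
    then have "X = \<tau> -` ((\<lambda>n. indicator {k} n :: real) -` A) \<inter> space M" using e by simp
    then show "X \<in> {Y. \<exists>A. Y = \<tau> -` A \<inter> space M}" by blast
  qed
next
  case False
  have e2: "(\<lambda>\<omega>. \<Phi> (zk \<omega>)) -` A \<inter> space M = zk -` (\<Phi> -` A) \<inter> space M" for A by auto
  have m: "A \<in> sets borel \<Longrightarrow> \<Phi> -` A \<in> sets borel" for A using measurable_sets[OF PhiB, of A] by simp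
  show ?thesis
  proof (simp add: False, intro subsetI)
    fix X assume "X \<in> {(\<lambda>\<omega>. \<Phi> (zk \<omega>)) -` A \<inter> space M |A. A \<in> sets borel}"
    then obtain A where A: "A \<in> sets borel" "X = (\<lambda>\<omega>. \<Phi> (zk \<omega>)) -` A \<inter> space M" by auto
    then have "X = zk -` (\<Phi> -` A) \<inter> space M" using e2 by simp
    moreover have "\<Phi> -` A \<in> sets borel" using m[OF A(1)] .
    ultimately show "X \<in> {zk -` B \<inter> space M |B. B \<in> sets borel}" by blast
  qed
qed


theorem theorem7:
  fixes Z :: "'a::euclidean_space set"
    and F :: "'a \<Rightarrow> 'a set"
    and D \<rho> \<gamma> \<alpha> c :: real
    and K :: nat
    and \<theta> :: "nat \<Rightarrow> real"
    and M :: "'b measure"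
    and z \<xi> :: "nat \<Rightarrow> 'b \<Rightarrow> 'a"
    and z0 :: 'a
    and \<tau> :: "'b \<Rightarrow> nat"
    and zbar :: "'a \<Rightarrow> 'a"
  assumes convex_Z: "convex Z" and compact_Z: "compact Z"
    and diam: "\<forall>u\<in>Z. \<forall>v\<in>Z. norm (u - v) \<le> D"
    and rho_pos: "\<rho> > 0"
    and wmon: "weakly_monotone_on Z F \<rho>"
    and mvi: "\<exists>zs. mvi_solution F Z zs"
    and gamma_def: "\<gamma> = 1 / (2 * \<rho>)"
    and alpha: "\<alpha> \<ge> 1"
    and K_pos: "K \<ge> 1"
    and theta_def: "\<And>k. \<theta> k = (real k + 1) powr \<alpha>"
    and c_pos: "c > 0"
    and prob: "prob_space M"
    and z0_in: "z0 \<in> Z"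
    and z_0: "\<And>\<omega>. \<omega> \<in> space M \<Longrightarrow> z 0 \<omega> = z0"
    and z_meas: "\<And>k. k \<le> K \<Longrightarrow> z k \<in> borel_measurable M"
    and z_in: "\<And>k \<omega>. k \<le> K \<Longrightarrow> \<omega> \<in> space M \<Longrightarrow> z k \<omega> \<in> Z"
    and xi_meas: "\<And>k. k < K \<Longrightarrow> \<xi> (Suc k) \<in> borel_measurable M"
    and xi_int: "\<And>k. k < K \<Longrightarrow> integrable M (\<lambda>\<omega>. norm (\<xi> (Suc k) \<omega>))"
    and xi_in: "\<And>k \<omega>. k < K \<Longrightarrow> \<omega> \<in> space M \<Longrightarrow>
                  \<xi> (Suc k) \<omega> \<in> prox_map F \<gamma> (z k \<omega>) (z (Suc k) \<omega>)"
    and xi_gap: "\<And>k u. k < K \<Longrightarrow> u \<in> Z \<Longrightarrow>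
                  AE \<omega> in M. real_cond_exp M (vimage_algebra (space M) (z k) borel)
                       (\<lambda>\<omega>'. inner (\<xi> (Suc k) \<omega>') (z (Suc k) \<omega>' - u)) \<omega> \<le> c / (real k + 1)"
    and tau_meas: "\<tau> \<in> measurable M (count_space UNIV)"
    and tau_dist: "\<And>k. k < K \<Longrightarrow>
                  measure M {\<omega> \<in> space M. \<tau> \<omega> = k} = \<theta> k / (\<Sum>l<K. \<theta> l)"
    and tau_indep: "\<And>k. k < K \<Longrightarrow> prob_space.indep_set M
                  {\<tau> -` A \<inter> space M | A. A \<in> sets (count_space UNIV)}
                  {z k -` B \<inter> space M | B. B \<in> sets borel}"
    and zbar_sol: "\<forall>w\<in>Z. svi_solution (prox_map F \<gamma> w) Z (zbar w)"
  shows "prob_space.expectation M (\<lambda>\<omega>. (norm (z (\<tau> \<omega>) \<omega> - zbar (z (\<tau> \<omega>) \<omega>)))\<^sup>2)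
           \<le> 2 * D\<^sup>2 * (\<alpha> + 1) / real K + 4 * c * (\<alpha> + 1) / (real K * \<rho>)"
proof -
  interpret prob_space M by (rule prob)
  obtain zs where mv: "mvi_solution F Z zs" using mvi by blast
  have zsZ: "zs \<in> Z" using mv unfolding mvi_solution_def by blast
  have Zne: "Z \<noteq> {}" using z0_in by blast
  have closedZ: "closed Z" using compact_Z by (rule compact_imp_closed)
  have D0: "D \<ge> 0" using diam z0_in by (metis norm_ge_zero order_trans)
  have zbarZ: "\<And>w. w \<in> Z \<Longrightarrow> zbar w \<in> Z" using zbar_sol unfolding svi_solution_def by blast
  have zbar_lip: "\<And>w w'. w \<in> Z \<Longrightarrow> w' \<in> Z \<Longrightarrow> norm (zbar w - zbar w') \<le> 2 * norm (w - w')"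
    using prox_lip[OF wmon rho_pos gamma_def] zbar_sol by blast
  have zbar_cont: "continuous_on Z zbar"
    by (rule lipschitz_on_continuous_on[of 2], rule lipschitz_onI) (auto simp: dist_norm zbar_lip)
  define \<phi> where "\<phi> = zbar \<circ> closest_point Z"
  have cp_cont: "continuous_on UNIV (closest_point Z)"
    by (rule continuous_on_closest_point[OF convex_Z closedZ Zne])
  have phi_cont: "continuous_on UNIV \<phi>"
    unfolding \<phi>_def
    by (rule continuous_on_compose[OF cp_cont continuous_on_subset[OF zbar_cont]])
       (auto intro: closest_point_in_set[OF closedZ Zne])
  have phi_eq: "\<And>w. w \<in> Z \<Longrightarrow> \<phi> w = zbar w" unfolding \<phi>_def by (simp add: closest_point_self)
  have phiZ: "\<And>w. \<phi> w \<in> Z" unfolding \<phi>_def using zbarZ closest_point_in_set[OF closedZ Zne] by simp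
  define \<Phi> where "\<Phi> = (\<lambda>w. (norm (w - \<phi> w))\<^sup>2)"
  have Phi_cont: "continuous_on UNIV \<Phi>" unfolding \<Phi>_def by (intro continuous_intros phi_cont)
  have zm[measurable]: "z k \<in> borel_measurable M" if "k \<le> K" for k using z_meas that .
  have Phim: "(\<lambda>\<omega>. \<Phi> (z k \<omega>)) \<in> borel_measurable M" if "k \<le> K" for k
    by (rule borel_measurable_continuous_on[OF Phi_cont zm[OF that]])
  have phim: "(\<lambda>\<omega>. \<phi> (z k \<omega>)) \<in> borel_measurable M" if "k \<le> K" for k
    by (rule borel_measurable_continuous_on[OF phi_cont zm[OF that]])
  have diamZ: "\<And>u v. u \<in> Z \<Longrightarrow> v \<in> Z \<Longrightarrow> (norm (u - v))\<^sup>2 \<le> D\<^sup>2"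
    using diam by (intro power_mono) auto
  have int_sq: "integrable M (\<lambda>\<omega>. (norm (V \<omega> - W \<omega>))\<^sup>2)"
    if "V \<in> borel_measurable M" "W \<in> borel_measurable M" "\<And>\<omega>. \<omega> \<in> space M \<Longrightarrow> V \<omega> \<in> Z"
       "\<And>\<omega>. \<omega> \<in> space M \<Longrightarrow> W \<omega> \<in> Z" for V W
  proof (rule integrable_const_bound[where B="D\<^sup>2"])
    show "AE x in M. norm ((norm (V x - W x))\<^sup>2) \<le> D\<^sup>2" using that diamZ by (auto intro!: AE_I2)
    show "(\<lambda>\<omega>. (norm (V \<omega> - W \<omega>))\<^sup>2) \<in> borel_measurable M" using that(1,2) by measurable
  qed
  define a where "a = (\<lambda>j. \<integral>\<omega>. (norm (z j \<omega> - zs))\<^sup>2 \<partial>M)"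
  define f where "f = (\<lambda>j. \<integral>\<omega>. \<Phi> (z j \<omega>) \<partial>M)"
  have a_int: "integrable M (\<lambda>\<omega>. (norm (z j \<omega> - zs))\<^sup>2)" if "j \<le> K" for j
    using int_sq[of "z j" "\<lambda>_. zs"] that z_in zsZ by auto
  have a_bd: "0 \<le> a j \<and> a j \<le> D\<^sup>2" if "j \<le> K" for j
  proof
    show "0 \<le> a j" unfolding a_def by (rule integral_nonneg_AE) auto
    have "a j \<le> (\<integral>\<omega>. D\<^sup>2 \<partial>M)" unfolding a_def
      using a_int[OF that] diamZ z_in that zsZ by (intro integral_mono) auto
    then show "a j \<le> D\<^sup>2" by (simp add: prob_space)
  qed
  have fk: "f k \<le> 2 * (a k - a (Suc k)) + 4 * c / (\<rho> * (real k + 1))" if k: "k < K" for k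
  proof -
    have kK: "k \<le> K" "Suc k \<le> K" using k by auto
    have [measurable]: "\<xi> (Suc k) \<in> borel_measurable M" using xi_meas[OF k] .
    have gapU: "(\<integral>\<omega>. inner (\<xi> (Suc k) \<omega>) (z (Suc k) \<omega> - \<phi> (z k \<omega>)) \<partial>M) \<le> c / (real k + 1)"
      by (rule cond_gap[OF prob compact_Z zm[OF kK(1)] xi_meas[OF k] xi_int[OF k] zm[OF kK(2)]
            z_in[OF kK(2)] phi_cont phiZ xi_gap[OF k]])
    have gapS: "(\<integral>\<omega>. inner (\<xi> (Suc k) \<omega>) (z (Suc k) \<omega> - (\<lambda>_. zs) (z k \<omega>)) \<partial>M) \<le> c / (real k + 1)"
      by (rule cond_gap[OF prob compact_Z zm[OF kK(1)] xi_meas[OF k] xi_int[OF k] zm[OF kK(2)]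
            z_in[OF kK(2)] continuous_on_const zsZ xi_gap[OF k]])
    have intU: "integrable M (\<lambda>\<omega>. inner (\<xi> (Suc k) \<omega>) (z (Suc k) \<omega> - \<phi> (z k \<omega>)))"
      by (rule int_inner[OF xi_meas[OF k] xi_int[OF k] zm[OF kK(2)] phim[OF kK(1)], where B=D])
         (use diam z_in[OF kK(2)] phiZ in blast)
    have intS: "integrable M (\<lambda>\<omega>. inner (\<xi> (Suc k) \<omega>) (z (Suc k) \<omega> - zs))"
      using int_inner[OF xi_meas[OF k] xi_int[OF k] zm[OF kK(2)], of "\<lambda>_. zs" D]
      using diam z_in[OF kK(2)] zsZ by auto
    have pw: "\<Phi> (z k \<omega>) \<le> 2 * ((norm (z k \<omega> - zs))\<^sup>2 - (norm (z (Suc k) \<omega> - zs))\<^sup>2)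
        + 2 / \<rho> * inner (\<xi> (Suc k) \<omega>) (z (Suc k) \<omega> - zs)
        + 2 / \<rho> * inner (\<xi> (Suc k) \<omega>) (z (Suc k) \<omega> - \<phi> (z k \<omega>))" if \<omega>: "\<omega> \<in> space M" for \<omega>
    proof -
      let ?w = "z k \<omega>" and ?z' = "z (Suc k) \<omega>" and ?x = "\<xi> (Suc k) \<omega>"
      have wZ: "?w \<in> Z" and z'Z: "?z' \<in> Z" using z_in kK \<omega> by auto
      have xi: "?x \<in> prox_map F \<gamma> ?w ?z'" using xi_in[OF k \<omega>] .
      have q1: "\<rho> * (norm (?z' - \<phi> ?w))\<^sup>2 \<le> inner ?x (?z' - \<phi> ?w)"
        using prox_strong[OF wmon rho_pos gamma_def z'Z xi] zbar_sol wZ phi_eq[OF wZ] by auto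
      have q2: "(norm (?z' - zs))\<^sup>2 + (norm (?z' - ?w))\<^sup>2 \<le> (norm (?w - zs))\<^sup>2 + inner ?x (?z' - zs) / \<rho>"
        by (rule prox_mvi[OF rho_pos gamma_def z'Z xi mv])
      have q3: "\<Phi> ?w \<le> 2 * (norm (?z' - ?w))\<^sup>2 + 2 * (norm (?z' - \<phi> ?w))\<^sup>2"
      proof -
        have "norm (?w - \<phi> ?w) \<le> norm (?z' - ?w) + norm (?z' - \<phi> ?w)"
          using norm_triangle_ineq[of "?w - ?z'" "?z' - \<phi> ?w"] by (simp add: norm_minus_commute)
        then have "(norm (?w - \<phi> ?w))\<^sup>2 \<le> (norm (?z' - ?w) + norm (?z' - \<phi> ?w))\<^sup>2"
          by (intro power_mono) auto
        also have "\<dots> \<le> 2 * (norm (?z' - ?w))\<^sup>2 + 2 * (norm (?z' - \<phi> ?w))\<^sup>2"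
          by (smt (verit, del_insts) sum_squares_bound power2_sum)
        finally show ?thesis unfolding \<Phi>_def .
      qed
      have q1': "(norm (?z' - \<phi> ?w))\<^sup>2 \<le> inner ?x (?z' - \<phi> ?w) / \<rho>"
        using q1 rho_pos by (simp add: field_simps)
      show ?thesis using q1' q2 q3 by (simp add: field_simps)
    qed
    have "f k \<le> (\<integral>\<omega>. 2 * ((norm (z k \<omega> - zs))\<^sup>2 - (norm (z (Suc k) \<omega> - zs))\<^sup>2)
        + 2 / \<rho> * inner (\<xi> (Suc k) \<omega>) (z (Suc k) \<omega> - zs)
        + 2 / \<rho> * inner (\<xi> (Suc k) \<omega>) (z (Suc k) \<omega> - \<phi> (z k \<omega>)) \<partial>M)"
      unfolding f_def
    proof (rule integral_mono)
      show "integrable M (\<lambda>\<omega>. \<Phi> (z k \<omega>))"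
        unfolding \<Phi>_def by (rule int_sq[OF zm[OF kK(1)] phim[OF kK(1)]]) (use z_in kK phiZ in auto)
      show "integrable M (\<lambda>\<omega>. 2 * ((norm (z k \<omega> - zs))\<^sup>2 - (norm (z (Suc k) \<omega> - zs))\<^sup>2)
        + 2 / \<rho> * inner (\<xi> (Suc k) \<omega>) (z (Suc k) \<omega> - zs)
        + 2 / \<rho> * inner (\<xi> (Suc k) \<omega>) (z (Suc k) \<omega> - \<phi> (z k \<omega>)))"
        using a_int[OF kK(1)] a_int[OF kK(2)] intS intU by auto
    qed (use pw in auto)
    also have "\<dots> = 2 * (a k - a (Suc k))
        + 2 / \<rho> * (\<integral>\<omega>. inner (\<xi> (Suc k) \<omega>) (z (Suc k) \<omega> - zs) \<partial>M)
        + 2 / \<rho> * (\<integral>\<omega>. inner (\<xi> (Suc k) \<omega>) (z (Suc k) \<omega> - \<phi> (z k \<omega>)) \<partial>M)"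
      unfolding a_def using a_int[OF kK(1)] a_int[OF kK(2)] intS intU by simp
    also have "\<dots> \<le> 2 * (a k - a (Suc k)) + 2 / \<rho> * (c / (real k + 1)) + 2 / \<rho> * (c / (real k + 1))"
      using gapS gapU rho_pos by (intro add_mono mult_left_mono) auto
    also have "\<dots> = 2 * (a k - a (Suc k)) + 4 * c / (\<rho> * (real k + 1))"
      using rho_pos by (simp add: field_simps)
    finally show ?thesis .
  qed
  define S where "S = (\<Sum>l<K. \<theta> l)"
  have thpos: "\<theta> k > 0" for k unfolding theta_def by simp
  have Spos: "S > 0" unfolding S_def using K_pos thpos by (intro sum_pos) (auto simp: lessThan_empty_iff)
  have RHS0: "0 \<le> 2 * D\<^sup>2 * (\<alpha> + 1) / real K + 4 * c * (\<alpha> + 1) / (real K * \<rho>)"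
    using alpha c_pos rho_pos K_pos by (intro add_nonneg_nonneg divide_nonneg_nonneg mult_nonneg_nonneg) auto
  have tev: "{\<omega> \<in> space M. \<tau> \<omega> = k} \<in> events" for k
  proof -
    have "\<tau> -` {k} \<inter> space M \<in> sets M" by (rule measurable_sets[OF tau_meas]) simp
    moreover have "\<tau> -` {k} \<inter> space M = {\<omega> \<in> space M. \<tau> \<omega> = k}" by auto
    ultimately show ?thesis by simp
  qed
  have tauK: "AE \<omega> in M. \<tau> \<omega> < K"
  proof -
    have eq: "{\<omega> \<in> space M. \<tau> \<omega> < K} = (\<Union>k\<in>{..<K}. {\<omega> \<in> space M. \<tau> \<omega> = k})" by auto
    have "prob {\<omega> \<in> space M. \<tau> \<omega> < K} = (\<Sum>k<K. prob {\<omega> \<in> space M. \<tau> \<omega> = k})"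
      unfolding eq by (rule finite_measure_finite_Union) (auto simp: tev disjoint_family_on_def)
    also have "\<dots> = (\<Sum>k<K. \<theta> k / S)" using tau_dist S_def by simp
    also have "\<dots> = 1" using Spos unfolding sum_divide_distrib[symmetric] S_def by simp
    finally have "AE \<omega> in M. \<omega> \<in> {\<omega> \<in> space M. \<tau> \<omega> < K}" by (rule AE_prob_1)
    then show ?thesis by auto
  qed
  define g where "g = (\<lambda>\<omega>. (norm (z (\<tau> \<omega>) \<omega> - zbar (z (\<tau> \<omega>) \<omega>)))\<^sup>2)"
  define I where "I = (\<lambda>k \<omega>. indicator {k} (\<tau> \<omega>) :: real)"
  define h where "h = (\<lambda>\<omega>. \<Sum>k<K. I k \<omega> * \<Phi> (z k \<omega>))"
  have Im: "I k \<in> borel_measurable M" for k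
  proof -
    have "(indicator {k} :: nat \<Rightarrow> real) \<in> borel_measurable (count_space UNIV)" by simp
    from measurable_compose[OF tau_meas this] show ?thesis unfolding I_def by (simp add: comp_def)
  qed
  have Iint: "integrable M (I k)" for k
    by (rule integrable_const_bound[where B=1, OF _ Im]) (auto simp: I_def indicator_def)
  have Phiint: "integrable M (\<lambda>\<omega>. \<Phi> (z k \<omega>))" if "k \<le> K" for k
    unfolding \<Phi>_def by (rule int_sq[OF zm[OF that] phim[OF that]]) (use z_in that phiZ in auto)
  have EI: "(\<integral>\<omega>. I k \<omega> \<partial>M) = \<theta> k / S" if "k < K" for k
  proof -
    have "I k = indicator (\<tau> -` {k})" unfolding I_def by (auto simp: indicator_def)
    then have "(\<integral>\<omega>. I k \<omega> \<partial>M) = measure M (\<tau> -` {k} \<inter> space M)" by simp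
    also have "\<tau> -` {k} \<inter> space M = {\<omega> \<in> space M. \<tau> \<omega> = k}" by auto
    finally show ?thesis using tau_dist[OF that] S_def by simp
  qed
  have indterm: "(\<integral>\<omega>. I k \<omega> * \<Phi> (z k \<omega>) \<partial>M) = \<theta> k / S * f k"
     and indint: "integrable M (\<lambda>\<omega>. I k \<omega> * \<Phi> (z k \<omega>))" if k: "k < K" for k
  proof -
    have PhiB: "\<Phi> \<in> borel_measurable borel" by (rule borel_measurable_continuous_onI[OF Phi_cont])
    have ind0: "indep_sets (case_bool {\<tau> -` A \<inter> space M | A. A \<in> sets (count_space UNIV)}
                  {z k -` B \<inter> space M | B. B \<in> sets borel}) UNIV"
      using tau_indep[OF k] unfolding indep_set_def .
    have iv3: "indep_var borel (I k) borel (\<lambda>\<omega>. \<Phi> (z k \<omega>))"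
      unfolding indep_var_def indep_vars_def2
    proof
      show "\<forall>i\<in>UNIV. random_variable (case_bool borel borel i) (case_bool (I k) (\<lambda>\<omega>. \<Phi> (z k \<omega>)) i)"
        using Im Phim[of k] k by (auto split: bool.split)
      show "indep_sets (\<lambda>i. {case_bool (I k) (\<lambda>\<omega>. \<Phi> (z k \<omega>)) i -` A \<inter> space M |A. A \<in> sets (case_bool borel borel i)}) UNIV"
      proof (rule indep_sets_mono_sets[OF ind0])
        fix i :: bool
        show "{case_bool (I k) (\<lambda>\<omega>. \<Phi> (z k \<omega>)) i -` A \<inter> space M |A. A \<in> sets (case_bool borel borel i)}
              \<subseteq> case_bool {\<tau> -` A \<inter> space M | A. A \<in> sets (count_space UNIV)}
                  {z k -` B \<inter> space M | B. B \<in> sets borel} i"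
          by (rule indep_case[OF _ PhiB]) (auto simp: I_def)
      qed
    qed
    show "(\<integral>\<omega>. I k \<omega> * \<Phi> (z k \<omega>) \<partial>M) = \<theta> k / S * f k"
      using indep_var_lebesgue_integral[OF iv3 Iint Phiint] EI[OF k] k unfolding f_def by simp
    show "integrable M (\<lambda>\<omega>. I k \<omega> * \<Phi> (z k \<omega>))"
      using indep_var_integrable[OF iv3 Iint Phiint] k by simp
  qed
  have hm: "h \<in> borel_measurable M"
    unfolding h_def using Im Phim by (intro borel_measurable_sum borel_measurable_times) auto
  have gh: "AE \<omega> in M. g \<omega> = h \<omega>"
    using tauK
  proof (rule AE_mp, intro AE_I2 impI)
    fix \<omega> assume \<omega>: "\<omega> \<in> space M" and t: "\<tau> \<omega> < K"
    have "h \<omega> = (\<Sum>k<K. if k = \<tau> \<omega> then \<Phi> (z k \<omega>) else 0)"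
      unfolding h_def I_def by (intro sum.cong) (auto simp: indicator_def)
    also have "\<dots> = \<Phi> (z (\<tau> \<omega>) \<omega>)" using t by simp
    also have "\<dots> = g \<omega>" unfolding \<Phi>_def g_def using phi_eq z_in t \<omega> by simp
    finally show "g \<omega> = h \<omega>" by simp
  qed
  have Eh: "(\<integral>\<omega>. h \<omega> \<partial>M) = (\<Sum>k<K. \<theta> k / S * f k)"
    unfolding h_def using indint indterm by (simp add: integral_sum)
  have th_mono: "\<theta> k \<le> \<theta> (Suc k)" for k unfolding theta_def using alpha by (intro powr_mono2) auto
  define a' where "a' = (\<lambda>j. if j \<le> K then a j else 0)"
  have abel: "(\<Sum>k<K. \<theta> k * (a k - a (Suc k))) \<le> \<theta> (K - 1) * D\<^sup>2"
  proof -
    have "(\<Sum>k<Suc (K - 1). \<theta> k * (a' k - a' (Suc k))) + \<theta> (K - 1) * a' (Suc (K - 1)) \<le> \<theta> (K - 1) * D\<^sup>2"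
      by (rule abel_bound) (use th_mono thpos a_bd D0 in \<open>auto simp: a'_def less_imp_le\<close>)
    moreover have "Suc (K - 1) = K" using K_pos by simp
    moreover have "(\<Sum>k<K. \<theta> k * (a' k - a' (Suc k))) = (\<Sum>k<K. \<theta> k * (a k - a (Suc k)))"
      by (intro sum.cong) (auto simp: a'_def)
    moreover have "\<theta> (K - 1) * a' K \<ge> 0" using thpos[of "K - 1"] a_bd[of K] by (simp add: a'_def)
    ultimately show ?thesis by simp
  qed
  have thK: "\<theta> (K - 1) = real K powr \<alpha>" unfolding theta_def using K_pos by (simp add: of_nat_diff)
  have sum2: "(\<Sum>k<K. \<theta> k / (real k + 1)) \<le> \<theta> (K - 1)"
  proof -
    have "(\<Sum>k<K. \<theta> k / (real k + 1)) \<le> (\<Sum>k<K. real K powr (\<alpha> - 1))"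
    proof (rule sum_mono)
      fix k assume k: "k \<in> {..<K}"
      have "\<theta> k / (real k + 1) = (real k + 1) powr (\<alpha> - 1)"
        unfolding theta_def by (simp add: powr_diff)
      also have "\<dots> \<le> real K powr (\<alpha> - 1)" using k alpha by (intro powr_mono2) auto
      finally show "\<theta> k / (real k + 1) \<le> real K powr (\<alpha> - 1)" .
    qed
    also have "\<dots> = real K * real K powr (\<alpha> - 1)" by simp
    also have "\<dots> = real K powr \<alpha>" using K_pos by (simp add: powr_mult_base)
    finally show ?thesis using thK by simp
  qed
  have bound: "(\<Sum>k<K. \<theta> k / S * f k) \<le> real K powr \<alpha> * (2 * D\<^sup>2 + 4 * c / \<rho>) / S"
  proof -
    have "(\<Sum>k<K. \<theta> k / S * f k) \<le> (\<Sum>k<K. \<theta> k / S * (2 * (a k - a (Suc k)) + 4 * c / (\<rho> * (real k + 1))))"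
      using fk thpos Spos by (intro sum_mono mult_left_mono) (auto intro: less_imp_le)
    also have "\<dots> = (\<Sum>k<K. (2 * (\<theta> k * (a k - a (Suc k))) + 4 * c / \<rho> * (\<theta> k / (real k + 1))) / S)"
      using Spos rho_pos by (intro sum.cong refl) (simp add: field_simps)
    also have "\<dots> = (2 * (\<Sum>k<K. \<theta> k * (a k - a (Suc k))) + 4 * c / \<rho> * (\<Sum>k<K. \<theta> k / (real k + 1))) / S"
      by (simp add: sum_divide_distrib[symmetric] sum.distrib sum_distrib_left)
    also have "\<dots> \<le> (2 * (\<theta> (K - 1) * D\<^sup>2) + 4 * c / \<rho> * \<theta> (K - 1)) / S"
      using abel sum2 Spos c_pos rho_pos by (intro divide_right_mono add_mono mult_left_mono) auto
    also have "\<dots> = real K powr \<alpha> * (2 * D\<^sup>2 + 4 * c / \<rho>) / S" using thK by (simp add: algebra_simps)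
    finally show ?thesis .
  qed
  have Slow: "S \<ge> real K powr (\<alpha> + 1) / (\<alpha> + 1)"
    unfolding S_def theta_def using powr_sum_lower[of \<alpha> K] alpha by simp
  have fin: "(\<Sum>k<K. \<theta> k / S * f k) \<le> (\<alpha> + 1) * (2 * D\<^sup>2 + 4 * c / \<rho>) / real K"
    by (rule final_arith[OF K_pos alpha Slow _ bound]) (use c_pos rho_pos in simp)
  have rhs: "(\<alpha> + 1) * (2 * D\<^sup>2 + 4 * c / \<rho>) / real K
      = 2 * D\<^sup>2 * (\<alpha> + 1) / real K + 4 * c * (\<alpha> + 1) / (real K * \<rho>)"
    using rho_pos K_pos by (simp add: field_simps)
  show ?thesis
  proof (cases "integrable M g")
    case False
    then have "prob_space.expectation M g = 0" by (rule not_integrable_integral_eq)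
    then show ?thesis using RHS0 unfolding g_def by simp
  next
    case True
    then have gm: "g \<in> borel_measurable M" by (rule borel_measurable_integrable)
    have "(\<integral>\<omega>. g \<omega> \<partial>M) = (\<integral>\<omega>. h \<omega> \<partial>M)" by (rule integral_cong_AE[OF gm hm gh])
    then show ?thesis using Eh fin rhs unfolding g_def by simp
  qed
qed

end
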